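(* Let $\mathcal{B}$ be any unicast index coding problem with receivers $u_1,\dots,u_n$ and demand sets $W_1,\dots,W_n$, and let $G$ be its equivalent single unicast problem (ESUP). Then $$\beta^*_G\big(\max_i |W_i|\big)\le \beta^*_{\mathcal{B}}(1)\le \beta^*_G(1).$$
   Context: Index coding model. A unicast index coding problem has $n$ receivers $u_1,\dots,u_n$ and $N$ messages $\mathbf{x}_1,\dots,\mathbf{x}_N$, each a vector in $\mathcal{A}^m$ for a finite alphabet $\mathcal{A}$ and a positive integer $m$ (all messages have the same length). Receiver $u_i$ demands $\mathbf{x}_j$, $j\in W_i$, and knows $\mathbf{x}_j$, $j\in K_i$, where $W_i,K_i\subseteq[N]$, $W_i\cap K_i=\emptyset$, the $W_i$ are pairwise disjoint and every message is demanded by exactly one receiver. A single unicast problem is the case where every receiver demands exactly one message ($n=N$). An index code consists of an encoder mapping the messages to a codeword $\mathbf{c}\in\mathcal{A}^\ell$, subsets $R_i\subseteq[\ell]$ (receiver $u_i$ observes only $\mathbf{c}_{R_i}$), and decoders at each $u_i$ mapping $(\mathbf{c}_{R_i},\mathbf{x}_{K_i})$ to $\mathbf{x}_{W_i}$; it is valid if every receiver decodes correctly for all message values. Broadcast rate $\beta=\ell/m$; locality at $u_i$ is $r_i=|R_i|/(m|W_i|)$; locality of the code is $r=\max_i r_i$. For a problem $\mathcal{P}$, $\beta^*_{\mathcal{P}}(r)$ is the infimum of rates of valid index codes, over all $m\ge1$, with locality at most $r$. ESUP: given $\mathcal{B}$, its ESUP is the single unicast problem with the same $N$ messages and $N=\sum_i|W_i|$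 receivers: for each $u_i$ and each $j\in W_i$ there is one receiver that demands only $\mathbf{x}_j$ and has side information $\mathbf{x}_{K_i}$. *)

theory Defs
  imports Complex_Main
begin

text \<open>Messages are indexed by j < N, receivers by i < n; receiver i demands the
messages in W i and knows the messages in K i.\<close>

definition unicast_problem :: "nat \<Rightarrow> nat \<Rightarrow> (nat \<Rightarrow> nat set) \<Rightarrow> (nat \<Rightarrow> nat set) \<Rightarrow> bool" where
  "unicast_problem N n W K \<longleftrightarrow>
     (\<forall>i<n. W i \<subseteq> {..<N} \<and> K i \<subseteq> {..<N} \<and> W i \<inter> K i = {} \<and> W i \<noteq> {}) \<and>
     (\<forall>i<n. \<forall>i'<n. i \<noteq> i' \<longrightarrow> W i \<inter> W i' = {}) \<and>
     (\<Union>i<n. W i) = {..<N}"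

text \<open>Message assignments: x j k is the k-th symbol of message j (extensional).\<close>
definition msg_space :: "'a set \<Rightarrow> nat \<Rightarrow> nat \<Rightarrow> (nat \<Rightarrow> nat \<Rightarrow> 'a) set" where
  "msg_space A N m = {x. \<forall>j k. (j < N \<and> k < m \<longrightarrow> x j k \<in> A) \<and>
                               (\<not> (j < N \<and> k < m) \<longrightarrow> x j k = undefined)}"

text \<open>A valid index code of message length m and codeword length l: encoder E,
observed coordinate sets R i, and decoders D i receiving the observed part of
the codeword and the side information.\<close>
definition valid_index_code ::
  "'a set \<Rightarrow> nat \<Rightarrow> nat \<Rightarrow> (nat \<Rightarrow> nat set) \<Rightarrow> (nat \<Rightarrow> nat set) \<Rightarrow> nat \<Rightarrow> nat \<Rightarrow>
   ((nat \<Rightarrow> nat \<Rightarrow> 'a) \<Rightarrow> (nat \<Rightarrow> 'a)) \<Rightarrow> (nat \<Rightarrow> nat set) \<Rightarrow>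
   (nat \<Rightarrow> (nat \<Rightarrow> 'a) \<Rightarrow> (nat \<Rightarrow> nat \<Rightarrow> 'a) \<Rightarrow> (nat \<Rightarrow> nat \<Rightarrow> 'a)) \<Rightarrow> bool" where
  "valid_index_code A N n W K m l E R D \<longleftrightarrow>
     (\<forall>x\<in>msg_space A N m. \<forall>t<l. E x t \<in> A) \<and>
     (\<forall>i<n. R i \<subseteq> {..<l}) \<and>
     (\<forall>i<n. \<forall>x\<in>msg_space A N m.
        \<forall>j\<in>W i. \<forall>k<m.
          D i (\<lambda>t. if t \<in> R i then E x t else undefined)
              (\<lambda>j' k'. if j' \<in> K i then x j' k' else undefined) j k = x j k)"

definition locality_le :: "nat \<Rightarrow> (nat \<Rightarrow> nat set) \<Rightarrow> nat \<Rightarrow> (nat \<Rightarrow> nat set) \<Rightarrow> real \<Rightarrow> bool" where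
  "locality_le n W m R r \<longleftrightarrow> (\<forall>i<n. real (card (R i)) / (real m * real (card (W i))) \<le> r)"

definition beta_star :: "'a set \<Rightarrow> nat \<Rightarrow> nat \<Rightarrow> (nat \<Rightarrow> nat set) \<Rightarrow> (nat \<Rightarrow> nat set) \<Rightarrow> real \<Rightarrow> real" where
  "beta_star A N n W K r = Inf {real l / real m | m l E R D.
      m \<ge> 1 \<and> valid_index_code A N n W K m l E R D \<and> locality_le n W m R r}"

text \<open>ESUP: one receiver per message j < N, demanding {j} with the side
information of the (unique) receiver of the original problem demanding j.\<close>
definition esup_K :: "nat \<Rightarrow> (nat \<Rightarrow> nat set) \<Rightarrow> (nat \<Rightarrow> nat set) \<Rightarrow> nat \<Rightarrow> nat set" where
  "esup_K n W K j = K (THE i. i < n \<and> j \<in> W i)"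

definition esup_W :: "nat \<Rightarrow> nat set" where
  "esup_W j = {j}"

end

theory Submission
  imports Defs
begin

lemma owner_uniq:
  assumes "unicast_problem N n W K" "i < n" "j \<in> W i" "i' < n" "j \<in> W i'"
  shows "i' = i"
proof (rule ccontr)
  assume "i' \<noteq> i"
  hence "W i \<inter> W i' = {}" using assms(1,2,4) unfolding unicast_problem_def by blast
  thus False using assms(3,5) by blast
qed

lemma owner_eq:
  assumes "unicast_problem N n W K" "i < n" "j \<in> W i"
  shows "(THE i. i < n \<and> j \<in> W i) = i"
proof (rule the_equality)
  show "i < n \<and> j \<in> W i" using assms(2,3) by simp
  show "\<And>i'. i' < n \<and> j \<in> W i' \<Longrightarrow> i' = i" using owner_uniq[OF assms(1,2,3)] by blast
qed

lemma owner:
  assumes "unicast_problem N n W K" "j < N"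
  shows "(THE i. i < n \<and> j \<in> W i) < n \<and> j \<in> W (THE i. i < n \<and> j \<in> W i)"
proof -
  have "j \<in> (\<Union>i<n. W i)" using assms unfolding unicast_problem_def by simp
  then obtain i where i: "i < n" "j \<in> W i" by blast
  show ?thesis using owner_eq[OF assms(1) i] i by simp
qed

lemma G_nonempty:
  assumes "A \<noteq> {}"
  shows "real N / real 1 \<in> {real l / real m | m l E R D.
      m \<ge> 1 \<and> valid_index_code A N N esup_W K' m l E R D \<and> locality_le N esup_W m R 1}"
proof -
  define E :: "(nat \<Rightarrow> nat \<Rightarrow> 'a) \<Rightarrow> nat \<Rightarrow> 'a" where "E = (\<lambda>x t. x t 0)"
  define R :: "nat \<Rightarrow> nat set" where "R = (\<lambda>j. {j})"
  define D :: "nat \<Rightarrow> (nat \<Rightarrow> 'a) \<Rightarrow> (nat \<Rightarrow> nat \<Rightarrow> 'a) \<Rightarrow> (nat \<Rightarrow> nat \<Rightarrow> 'a)"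
    where "D = (\<lambda>j y s j' k. y j')"
  have "valid_index_code A N N esup_W K' 1 N E R D"
    unfolding valid_index_code_def E_def R_def D_def msg_space_def esup_W_def by auto
  moreover have "locality_le N esup_W 1 R 1"
    unfolding locality_le_def R_def esup_W_def by simp
  ultimately show ?thesis
    by (intro CollectI exI[of _ 1] exI[of _ N] exI[of _ E] exI[of _ R] exI[of _ D]) simp
qed

lemma L1:
  assumes up: "unicast_problem N n W K" and m: "m \<ge> 1"
    and v: "valid_index_code A N N esup_W (esup_K n W K) m l E R D"
    and loc: "locality_le N esup_W m R 1"
  shows "\<exists>R' D'. valid_index_code A N n W K m l E R' D' \<and> locality_le n W m R' 1"
proof -
  define own where "own = (\<lambda>j. THE i. i < n \<and> j \<in> W i)"
  define R' where "R' = (\<lambda>i. \<Union>j\<in>W i. R j)"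
  define D' :: "nat \<Rightarrow> (nat \<Rightarrow> _) \<Rightarrow> (nat \<Rightarrow> nat \<Rightarrow> _) \<Rightarrow> (nat \<Rightarrow> nat \<Rightarrow> _)"
    where "D' = (\<lambda>i y s j k. D j (\<lambda>t. if t \<in> R j then y t else undefined) s j k)"
  have Wsub: "\<And>i. i < n \<Longrightarrow> W i \<subseteq> {..<N}" using up unfolding unicast_problem_def by blast
  have Wne: "\<And>i. i < n \<Longrightarrow> W i \<noteq> {}" using up unfolding unicast_problem_def by blast
  have Wfin: "\<And>i. i < n \<Longrightarrow> finite (W i)" using Wsub finite_subset by blast
  have V1: "\<forall>x\<in>msg_space A N m. \<forall>t<l. E x t \<in> A" using v unfolding valid_index_code_def by blast
  have V2: "\<forall>j<N. R j \<subseteq> {..<l}" using v unfolding valid_index_code_def by blast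
  have V3: "\<forall>j<N. \<forall>x\<in>msg_space A N m. \<forall>k<m.
          D j (\<lambda>t. if t \<in> R j then E x t else undefined)
              (\<lambda>j' k'. if j' \<in> esup_K n W K j then x j' k' else undefined) j k = x j k"
    using v unfolding valid_index_code_def esup_W_def by blast
  have "valid_index_code A N n W K m l E R' D'"
    unfolding valid_index_code_def
  proof (intro conjI allI impI ballI)
    show "\<And>x t. x \<in> msg_space A N m \<Longrightarrow> t < l \<Longrightarrow> E x t \<in> A" using V1 by blast
    show "\<And>i. i < n \<Longrightarrow> R' i \<subseteq> {..<l}" unfolding R'_def using V2 Wsub by blast
    fix i x j k assume i: "i < n" and x: "x \<in> msg_space A N m" and j: "j \<in> W i" and k: "k < m"
    have jN: "j < N" using Wsub i j by blast
    have ek: "esup_K n W K j = K i" unfolding esup_K_def using owner_eq[OF up i j] by simp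
    have sub: "R j \<subseteq> R' i" unfolding R'_def using j by blast
    have eq: "(\<lambda>t. if t \<in> R j then (if t \<in> R' i then E x t else undefined) else undefined)
        = (\<lambda>t. if t \<in> R j then E x t else undefined)" using sub by (intro ext) auto
    have "D j (\<lambda>t. if t \<in> R j then E x t else undefined)
          (\<lambda>j' k'. if j' \<in> esup_K n W K j then x j' k' else undefined) j k = x j k"
      using V3 jN x k by blast
    thus "D' i (\<lambda>t. if t \<in> R' i then E x t else undefined)
           (\<lambda>j' k'. if j' \<in> K i then x j' k' else undefined) j k = x j k"
      unfolding D'_def eq ek by simp
  qed
  moreover have "locality_le n W m R' 1"
    unfolding locality_le_def
  proof (intro allI impI)
    fix i assume i: "i < n"
    have "\<And>j. j \<in> W i \<Longrightarrow> card (R j) \<le> m"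
    proof -
      fix j assume j: "j \<in> W i"
      have jN: "j < N" using Wsub i j by blast
      have "real (card (R j)) / (real m * 1) \<le> 1"
        using loc jN unfolding locality_le_def esup_W_def by force
      thus "card (R j) \<le> m" using m by (simp add: divide_le_eq)
    qed
    hence "(\<Sum>j\<in>W i. card (R j)) \<le> (\<Sum>j\<in>W i. m)" by (rule sum_mono)
    moreover have "card (R' i) \<le> (\<Sum>j\<in>W i. card (R j))"
      unfolding R'_def by (rule card_UN_le[OF Wfin[OF i]])
    ultimately have "card (R' i) \<le> (\<Sum>j\<in>W i. m)" by linarith
    hence c: "card (R' i) \<le> m * card (W i)" by (simp add: mult.commute)
    have pos: "real m * real (card (W i)) > 0" using m Wne[OF i] Wfin[OF i]
      by (simp add: card_gt_0_iff)
    have "real (card (R' i)) \<le> real m * real (card (W i))" using c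
      by (metis of_nat_le_iff of_nat_mult)
    thus "real (card (R' i)) / (real m * real (card (W i))) \<le> 1"
      using pos by (simp add: divide_le_eq)
  qed
  ultimately show ?thesis by blast
qed

lemma L2:
  assumes up: "unicast_problem N n W K" and m: "m \<ge> 1"
    and v: "valid_index_code A N n W K m l E R D"
    and loc: "locality_le n W m R 1"
  shows "\<exists>R' D'. valid_index_code A N N esup_W (esup_K n W K) m l E R' D'
            \<and> locality_le N esup_W m R' (real (Max ((\<lambda>i. card (W i)) ` {..<n})))"
proof -
  define own where "own = (\<lambda>j. THE i. i < n \<and> j \<in> W i)"
  have ow: "\<And>j. j < N \<Longrightarrow> own j < n \<and> j \<in> W (own j)" unfolding own_def using owner[OF up] by blast
  define R' where "R' = (\<lambda>j. R (own j))"
  define D' :: "nat \<Rightarrow> (nat \<Rightarrow> _) \<Rightarrow> (nat \<Rightarrow> nat \<Rightarrow> _) \<Rightarrow> (nat \<Rightarrow> nat \<Rightarrow> _)"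
    where "D' = (\<lambda>j. D (own j))"
  have Wsub: "\<And>i. i < n \<Longrightarrow> W i \<subseteq> {..<N}" using up unfolding unicast_problem_def by blast
  have Wfin: "\<And>i. i < n \<Longrightarrow> finite (W i)" using Wsub finite_subset by blast
  have "valid_index_code A N N esup_W (esup_K n W K) m l E R' D'"
    unfolding valid_index_code_def
  proof (intro conjI allI impI ballI)
    show "\<And>x t. x \<in> msg_space A N m \<Longrightarrow> t < l \<Longrightarrow> E x t \<in> A"
      using v unfolding valid_index_code_def by blast
    show "\<And>j. j < N \<Longrightarrow> R' j \<subseteq> {..<l}"
      using v ow unfolding valid_index_code_def R'_def by blast
    fix j x j' k assume j: "j < N" and x: "x \<in> msg_space A N m" and j': "j' \<in> esup_W j" and k: "k < m"
    have jj: "j' = j" using j' unfolding esup_W_def by simp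
    have ek: "esup_K n W K j = K (own j)" unfolding esup_K_def own_def by simp
    have "D (own j) (\<lambda>t. if t \<in> R (own j) then E x t else undefined)
          (\<lambda>j' k'. if j' \<in> K (own j) then x j' k' else undefined) j k = x j k"
      using v ow[OF j] x k unfolding valid_index_code_def by blast
    thus "D' j (\<lambda>t. if t \<in> R' j then E x t else undefined)
          (\<lambda>j'' k'. if j'' \<in> esup_K n W K j then x j'' k' else undefined) j' k = x j' k"
      unfolding D'_def R'_def ek jj by simp
  qed
  moreover have "locality_le N esup_W m R' (real (Max ((\<lambda>i. card (W i)) ` {..<n})))"
    unfolding locality_le_def esup_W_def
  proof (intro allI impI)
    fix j assume j: "j < N"
    let ?i = "own j"
    have i: "?i < n" using ow j by blast
    have "card (W ?i) \<le> Max ((\<lambda>i. card (W i)) ` {..<n})" using i by (intro Max_ge) auto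
    moreover have "real (card (R ?i)) \<le> real m * real (card (W ?i))"
    proof -
      have "card (W ?i) > 0" using ow[OF j] Wfin[OF i] card_gt_0_iff by blast
      hence pos: "real m * real (card (W ?i)) > 0" using m by simp
      have "real (card (R ?i)) / (real m * real (card (W ?i))) \<le> 1"
        using loc i unfolding locality_le_def by blast
      thus ?thesis using pos by (simp add: divide_le_eq)
    qed
    ultimately have "real (card (R ?i)) \<le> real m * real (Max ((\<lambda>i. card (W i)) ` {..<n}))"
      by (smt (verit) m of_nat_0_le_iff of_nat_mono mult_left_mono)
    thus "real (card (R' j)) / (real m * real (card {j})) \<le> real (Max ((\<lambda>i. card (W i)) ` {..<n}))"
      unfolding R'_def using m by (simp add: divide_le_eq mult.commute)
  qed
  ultimately show ?thesis by blast
qed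

theorem theorem2:
  fixes A :: "'a set" and N n :: nat and W K :: "nat \<Rightarrow> nat set"
  assumes "finite A" and "A \<noteq> {}"
    and "unicast_problem N n W K"
  shows "beta_star A N N esup_W (esup_K n W K) (real (Max ((\<lambda>i. card (W i)) ` {..<n})))
           \<le> beta_star A N n W K 1
       \<and> beta_star A N n W K 1 \<le> beta_star A N N esup_W (esup_K n W K) 1"
proof -
  let ?Mx = "real (Max ((\<lambda>i. card (W i)) ` {..<n}))"
  define SG where "SG = {real l / real m | m l E R D.
      m \<ge> 1 \<and> valid_index_code A N N esup_W (esup_K n W K) m l E R D \<and> locality_le N esup_W m R (1::real)}"
  define SGM where "SGM = {real l / real m | m l E R D.
      m \<ge> 1 \<and> valid_index_code A N N esup_W (esup_K n W K) m l E R D \<and> locality_le N esup_W m R ?Mx}"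
  define SB where "SB = {real l / real m | m l E R D.
      m \<ge> 1 \<and> valid_index_code A N n W K m l E R D \<and> locality_le n W m R (1::real)}"
  have GB: "SG \<subseteq> SB"
  proof
    fix r assume "r \<in> SG"
    then obtain m l E R D where r: "r = real l / real m" "m \<ge> 1"
      "valid_index_code A N N esup_W (esup_K n W K) m l E R D" "locality_le N esup_W m R 1"
      unfolding SG_def by blast
    from L1[OF assms(3) r(2) r(3) r(4)] obtain R' D' where
      c: "valid_index_code A N n W K m l E R' D'" "locality_le n W m R' 1" by blast
    show "r \<in> SB" unfolding SB_def
      by (intro CollectI exI[of _ m] exI[of _ l] exI[of _ E] exI[of _ R'] exI[of _ D'])
         (intro conjI r(1) r(2) c(1) c(2))
  qed
  have BG: "SB \<subseteq> SGM"
  proof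
    fix r assume "r \<in> SB"
    then obtain m l E R D where r: "r = real l / real m" "m \<ge> 1"
      "valid_index_code A N n W K m l E R D" "locality_le n W m R 1"
      unfolding SB_def by blast
    from L2[OF assms(3) r(2) r(3) r(4)] obtain R' D' where
      c: "valid_index_code A N N esup_W (esup_K n W K) m l E R' D'"
         "locality_le N esup_W m R' ?Mx" by blast
    show "r \<in> SGM" unfolding SGM_def
      by (intro CollectI exI[of _ m] exI[of _ l] exI[of _ E] exI[of _ R'] exI[of _ D'])
         (intro conjI r(1) r(2) c(1) c(2))
  qed
  have mem: "real N / real 1 \<in> SG" unfolding SG_def by (rule G_nonempty[OF assms(2)])
  have ne: "SG \<noteq> {}" using mem by (rule ex_in_conv[THEN iffD1, OF exI])
  have b1: "bdd_below SB" unfolding SB_def by (rule bdd_belowI[of _ 0]) auto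
  have b2: "bdd_below SGM" unfolding SGM_def by (rule bdd_belowI[of _ 0]) auto
  have i1: "Inf SB \<le> Inf SG" using cInf_superset_mono[OF ne b1 GB] .
  have neB: "SB \<noteq> {}" using ne GB by blast
  have i2: "Inf SGM \<le> Inf SB" using cInf_superset_mono[OF neB b2 BG] .
  have e1: "beta_star A N n W K 1 = Inf SB" unfolding beta_star_def SB_def by (rule refl)
  have e2: "beta_star A N N esup_W (esup_K n W K) 1 = Inf SG" unfolding beta_star_def SG_def by (rule refl)
  have e3: "beta_star A N N esup_W (esup_K n W K) ?Mx = Inf SGM" unfolding beta_star_def SGM_def by (rule refl)
  show ?thesis unfolding e1 e2 e3 using i1 i2 by (intro conjI)
qed

end
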